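(* Let $A\in\mathbb{C}^{m\times m}$ be diagonalizable with spectral decomposition $A=\sum_j a_jP_j$ (distinct eigenvalues, spectral projections $P_iP_j=\delta_{ij}P_i$, $\sum_jP_j=I_m$), and suppose $e^A$ has a period $k$, i.e. $k$ is the smallest positive integer with $(e^A)^k=I_m$. Let $n$ be a positive integer, written $n=kn_q+r$ with quotient $n_q$ and remainder $0\le r<k$. Then, for $B\in\mathbb{C}^{m\times m}$ with $A+B$ diagonalizable, as $B\to0$, $$\left[e^{A+B}\right]^n=e^{\,rA+r\cdot\mathrm{sspc}_A(B)+n\cdot\mathrm{ssp}_A(B)}+O(\|B\|^2).$$
   Context: $\|\cdot\|$ is the Frobenius norm. $\mathrm{ssp}_A(B):=\sum_jP_jBP_j$ and $\mathrm{sspc}_A(B):=\sum_{j\neq k}P_jBP_k$, where $P_j$ are the spectral projections of $A$. "$=\ldots+O(\|B\|^2)$" means there exist $c,\delta>0$ (depending on $A$ and $n$) such that the norm of the difference is at most $c\|B\|^2$ whenever $\|B\|\le\delta$ and $A+B$ is diagonalizable. *)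

theory Defs
  imports "HOL-Analysis.Analysis"
begin

text \<open>Complex m x m matrices are represented as complex^'m^'m (HOL-Analysis);
  the product is matrix multiplication (**), the identity is mat 1, and the
  library norm on this type is the Frobenius norm.\<close>

primrec mpow :: "complex^'m^'m \<Rightarrow> nat \<Rightarrow> complex^'m^'m" where
  "mpow M 0 = mat 1"
| "mpow M (Suc k) = M ** mpow M k"

definition mexp :: "complex^'m^'m \<Rightarrow> complex^'m^'m" where
  "mexp M = (\<Sum>k. (1 / fact k) *\<^sub>R mpow M k)"

definition csmult :: "complex \<Rightarrow> complex^'m^'m \<Rightarrow> complex^'m^'m" where
  "csmult c M = (\<chi> i j. c * M $ i $ j)"

definition diagonal_mat :: "complex^'m^'m \<Rightarrow> bool" where
  "diagonal_mat D \<longleftrightarrow> (\<forall>i j. i \<noteq> j \<longrightarrow> D $ i $ j = 0)"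

definition diagonalizable :: "complex^'m^'m \<Rightarrow> bool" where
  "diagonalizable M \<longleftrightarrow>
     (\<exists>(S::complex^'m^'m) (D::complex^'m^'m). invertible S \<and> diagonal_mat D \<and> M = S ** D ** matrix_inv S)"

text \<open>ssp and sspc relative to a spectral decomposition given by the finite set of
  distinct eigenvalues E and spectral projections P.\<close>
definition ssp :: "complex set \<Rightarrow> (complex \<Rightarrow> complex^'m^'m) \<Rightarrow> complex^'m^'m \<Rightarrow> complex^'m^'m" where
  "ssp E P B = (\<Sum>j\<in>E. P j ** B ** P j)"

definition sspc :: "complex set \<Rightarrow> (complex \<Rightarrow> complex^'m^'m) \<Rightarrow> complex^'m^'m \<Rightarrow> complex^'m^'m" where
  "sspc E P B = (\<Sum>(j,l)\<in>{(j,l). j \<in> E \<and> l \<in> E \<and> j \<noteq> l}. P j ** B ** P l)"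

end

theory Submission imports Defs begin

type_synonym ('m) cm = "complex^'m^'m"

lemma norm_sq_mat: "(norm (M::complex^'n^'m))^2 = (\<Sum>i\<in>UNIV. \<Sum>j\<in>UNIV. (cmod (M$i$j))^2)"
  by (simp add: norm_vec_def L2_set_def sum_nonneg)

lemma cs_entry: "(cmod (\<Sum>k\<in>UNIV. (a k::complex) * b k))^2 \<le> (\<Sum>k\<in>UNIV. (cmod (a k))^2) * (\<Sum>k\<in>UNIV. (cmod (b k))^2)"
proof -
  have "cmod (\<Sum>k\<in>UNIV. a k * b k) \<le> (\<Sum>k\<in>UNIV. \<bar>cmod (a k)\<bar> * \<bar>cmod (b k)\<bar>)"
    by (rule order_trans[OF norm_sum]) (simp add: norm_mult)
  also have "\<dots> \<le> L2_set (\<lambda>k. cmod (a k)) UNIV * L2_set (\<lambda>k. cmod (b k)) UNIV"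
    by (rule L2_set_mult_ineq)
  finally have "(cmod (\<Sum>k\<in>UNIV. a k * b k))^2 \<le> (L2_set (\<lambda>k. cmod (a k)) UNIV * L2_set (\<lambda>k. cmod (b k)) UNIV)^2"
    by (intro power_mono) auto
  also have "\<dots> = (\<Sum>k\<in>UNIV. (cmod (a k))^2) * (\<Sum>k\<in>UNIV. (cmod (b k))^2)"
    by (simp add: L2_set_def power_mult_distrib sum_nonneg)
  finally show ?thesis .
qed

lemma norm_mult_mat: "norm ((M::complex^'n^'m) ** (N::complex^'p^'n)) \<le> norm M * norm N"
proof -
  have "(norm (M ** N))^2 = (\<Sum>i\<in>UNIV. \<Sum>j\<in>UNIV. (cmod (\<Sum>k\<in>UNIV. M$i$k * N$k$j))^2)"
    by (simp add: norm_sq_mat matrix_matrix_mult_def)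
  also have "\<dots> \<le> (\<Sum>i\<in>UNIV. \<Sum>j\<in>UNIV. (\<Sum>k\<in>UNIV. (cmod (M$i$k))^2) * (\<Sum>k\<in>UNIV. (cmod (N$k$j))^2))"
    by (intro sum_mono cs_entry)
  also have "\<dots> = (\<Sum>i\<in>UNIV. \<Sum>k\<in>UNIV. (cmod (M$i$k))^2) * (\<Sum>j\<in>UNIV. \<Sum>k\<in>UNIV. (cmod (N$k$j))^2)"
    by (simp add: sum_product)
  also have "\<dots> = (norm M)^2 * (norm N)^2"
    by (subst sum.swap) (simp add: norm_sq_mat)
  finally have "(norm (M ** N))^2 \<le> (norm M * norm N)^2" by (simp add: power_mult_distrib)
  then show ?thesis by (rule power2_le_imp_le) simp
qed


lemma matrix_add_rdistrib': "((A::'a::semiring_1^'n^'m) + B) ** C = A ** C + B ** C"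
  by (vector matrix_matrix_mult_def sum.distrib[symmetric] field_simps)
lemma matrix_diff_ldistrib': "(A::'a::ring_1^'n^'m) ** (B - C) = A ** B - A ** C"
  by (vector matrix_matrix_mult_def sum_subtractf[symmetric] field_simps)
lemma matrix_diff_rdistrib': "((A::'a::ring_1^'n^'m) - B) ** C = A ** C - B ** C"
  by (vector matrix_matrix_mult_def sum_subtractf[symmetric] field_simps)
lemma matrix_sum_left: "(sum f S :: 'a::semiring_1^'n^'m) ** C = (\<Sum>s\<in>S. f s ** C)"
  by (induction S rule: infinite_finite_induct) (auto simp: matrix_add_rdistrib')
lemma matrix_sum_right: "(C :: 'a::semiring_1^'n^'m) ** sum f S = (\<Sum>s\<in>S. C ** f s)"
  by (induction S rule: infinite_finite_induct) (auto simp: matrix_add_ldistrib)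

lemma csmult_left: "csmult c M ** N = csmult c (M ** N)"
  by (vector csmult_def matrix_matrix_mult_def sum_distrib_left mult.assoc)
lemma csmult_right: "M ** csmult c N = csmult c (M ** N)"
  by (vector csmult_def matrix_matrix_mult_def sum_distrib_left mult.assoc mult.left_commute)
lemma csmult_add: "csmult c (M + N) = csmult c M + csmult c N"
  by (vector csmult_def distrib_left)
lemma csmult_diff: "csmult c (M - N) = csmult c M - csmult c N"
  by (vector csmult_def right_diff_distrib)
lemma csmult_add_left: "csmult (c + d) M = csmult c M + csmult d M"
  by (vector csmult_def distrib_right)
lemma csmult_csmult: "csmult c (csmult d M) = csmult (c * d) M"
  by (vector csmult_def mult.assoc)
lemma csmult_0[simp]: "csmult 0 M = 0" by (vector csmult_def)
lemma csmult_0_right[simp]: "csmult c 0 = 0" by (vector csmult_def)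
lemma csmult_1[simp]: "csmult 1 M = M" by (vector csmult_def)
lemma csmult_sum: "csmult c (sum f S) = (\<Sum>s\<in>S. csmult c (f s))"
  by (induction S rule: infinite_finite_induct) (auto simp: csmult_add)
lemma csmult_sum_left: "csmult (sum f S) M = (\<Sum>s\<in>S. csmult (f s) M)"
  by (induction S rule: infinite_finite_induct) (auto simp: csmult_add_left)
lemma scaleR_csmult: "r *\<^sub>R csmult c M = csmult (of_real r * c) M"
  by (vector csmult_def scaleR_conv_of_real mult.assoc)
lemma norm_csmult: "norm (csmult c (M::complex^'m^'m)) = cmod c * norm M"
proof -
  have "(norm (csmult c M))^2 = (cmod c * norm M)^2"
    by (simp add: norm_sq_mat csmult_def power_mult_distrib norm_mult sum_distrib_left)
  then show ?thesis by (simp add: power2_eq_iff_nonneg)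
qed

lemma bl_csmult_left: "bounded_linear (\<lambda>c. csmult c (M::complex^'m^'m))"
proof
  show "csmult (x + y) M = csmult x M + csmult y M" for x y by (rule csmult_add_left)
  show "csmult (r *\<^sub>R x) M = r *\<^sub>R csmult x M" for r x by (subst scaleR_csmult) (simp add: scaleR_conv_of_real)
  show "\<exists>K. \<forall>x. norm (csmult x M) \<le> norm x * K"
    by (rule exI[of _ "norm M"]) (simp add: norm_csmult)
qed

lemma sandwich_scaleR: "(P::complex^'m^'m) ** (r *\<^sub>R x) ** Q = r *\<^sub>R (P ** x ** Q)"
  by (vector matrix_matrix_mult_def sum_distrib_left sum_distrib_right scaleR_conv_of_real mult_ac)

lemma bl_sandwich: "bounded_linear (\<lambda>Y. (P::complex^'m^'m) ** Y ** Q)"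
proof
  show "P ** (x + y) ** Q = P ** x ** Q + P ** y ** Q" for x y
    by (simp add: matrix_add_ldistrib matrix_add_rdistrib')
  show "P ** (r *\<^sub>R x) ** Q = r *\<^sub>R (P ** x ** Q)" for r x
    by (vector matrix_matrix_mult_def sum_distrib_left sum_distrib_right scaleR_conv_of_real mult_ac)
  show "\<exists>K. \<forall>x. norm (P ** x ** Q) \<le> norm x * K"
  proof (rule exI[of _ "norm P * norm Q"], intro allI)
    fix x
    have "norm (P ** x ** Q) \<le> norm (P ** x) * norm Q" by (rule norm_mult_mat)
    also have "\<dots> \<le> norm P * norm x * norm Q" by (intro mult_right_mono norm_mult_mat) auto
    finally show "norm (P ** x ** Q) \<le> norm x * (norm P * norm Q)" by (simp add: ac_simps)
  qed
qed

lemma mpow_Suc': "mpow M (Suc k) = mpow M k ** M"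
  by (induction k) (auto simp: matrix_mul_assoc)

lemma norm_mpow: "norm (mpow (M::'m::finite cm) k) \<le> norm (mat 1 :: 'm cm) * norm M ^ k"
proof (induction k)
  case (Suc k)
  have "norm (mpow M (Suc k)) \<le> norm M * norm (mpow M k)" by (simp add: norm_mult_mat)
  also have "\<dots> \<le> norm M * (norm (mat 1 :: 'm cm) * norm M ^ k)" by (intro mult_left_mono Suc) auto
  finally show ?case by (simp add: ac_simps)
qed simp


primrec Lin :: "'m::finite cm \<Rightarrow> 'm cm \<Rightarrow> nat \<Rightarrow> 'm cm" where
  "Lin X Y 0 = 0"
| "Lin X Y (Suc n) = X ** Lin X Y n + Y ** mpow X n"

definition Rem :: "'m::finite cm \<Rightarrow> 'm cm \<Rightarrow> nat \<Rightarrow> 'm cm" where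
  "Rem X Y n = mpow (X + Y) n - mpow X n - Lin X Y n"

definition Dexp :: "'m::finite cm \<Rightarrow> 'm cm \<Rightarrow> 'm cm" where
  "Dexp X Y = (\<Sum>k. (1 / fact k) *\<^sub>R Lin X Y k)"

lemma Rem_0: "Rem X Y 0 = 0" by (simp add: Rem_def)

lemma Rem_Suc: "Rem X Y (Suc n) = Y ** Lin X Y n + (X + Y) ** Rem X Y n"
proof -
  have e: "mpow (X + Y) n = mpow X n + Lin X Y n + Rem X Y n" by (simp add: Rem_def)
  have "Rem X Y (Suc n) = (X + Y) ** (mpow X n + Lin X Y n + Rem X Y n) - X ** mpow X n
      - (X ** Lin X Y n + Y ** mpow X n)"
    by (simp add: Rem_def e[symmetric])
  also have "\<dots> = Y ** Lin X Y n + (X + Y) ** Rem X Y n"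
    by (simp add: matrix_add_ldistrib matrix_add_rdistrib' algebra_simps)
  finally show ?thesis .
qed

abbreviation c0 :: "'m::finite itself \<Rightarrow> real" where
  "c0 _ \<equiv> norm (mat 1 :: 'm cm)"

lemma norm_Lin: "norm (Lin (X::'m::finite cm) Y n) \<le> norm (mat 1 :: 'm cm) * n * norm Y * (norm X + 1)^n"
proof (induction n)
  case 0 then show ?case by simp
next
  case (Suc n)
  define c where "c = norm (mat 1 :: 'm cm)"
  define x where "x = norm X"
  define y where "y = norm Y"
  have c: "c \<ge> 0" "x \<ge> 0" "y \<ge> 0" by (auto simp: c_def x_def y_def)
  have IH: "norm (Lin X Y n) \<le> c * n * y * (x+1)^n" using Suc by (simp add: c_def x_def y_def)
  have "norm (Lin X Y (Suc n)) \<le> norm (X ** Lin X Y n) + norm (Y ** mpow X n)"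
    by (simp add: norm_triangle_ineq)
  also have "\<dots> \<le> x * norm (Lin X Y n) + y * norm (mpow X n)"
    by (intro add_mono order_trans[OF norm_mult_mat]) (auto simp: x_def y_def)
  also have "\<dots> \<le> x * (c * n * y * (x+1)^n) + y * (c * x^n)"
    using norm_mpow[of X n] IH c by (intro add_mono mult_left_mono) (auto simp: c_def x_def)
  also have "\<dots> \<le> (x+1) * (c * n * y * (x+1)^n) + y * (c * (x+1)^(Suc n))"
  proof (intro add_mono mult_right_mono mult_left_mono)
    have "x^n \<le> (x+1)^n" using c by (intro power_mono) auto
    also have "\<dots> \<le> (x+1)^(Suc n)" using c by (intro power_increasing) auto
    finally show "x^n \<le> (x+1)^(Suc n)" .
  qed (use c in auto)
  also have "\<dots> = c * (Suc n) * y * (x+1)^(Suc n)" by (simp add: algebra_simps)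
  finally show ?case by (simp add: c_def x_def y_def)
qed

lemma norm_Rem: "norm (Rem (X::'m::finite cm) Y n) \<le> norm (mat 1 :: 'm cm) * (real n)^2 * (norm Y)^2 * (norm X + norm Y + 1)^n"
proof (induction n)
  case 0 then show ?case by (simp add: Rem_0)
next
  case (Suc n)
  define c where "c = norm (mat 1 :: 'm cm)"
  define x where "x = norm X"
  define y where "y = norm Y"
  define t where "t = x + y + 1"
  have c: "c \<ge> 0" "x \<ge> 0" "y \<ge> 0" "t \<ge> 1" by (auto simp: c_def x_def y_def t_def)
  have IH: "norm (Rem X Y n) \<le> c * (real n)^2 * y^2 * t^n" using Suc by (simp add: c_def x_def y_def t_def)
  have L: "norm (Lin X Y n) \<le> c * n * y * (x+1)^n" using norm_Lin[of X Y n] by (simp add: c_def x_def y_def)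
  have xt: "(x+1)^n \<le> t^n" using c by (intro power_mono) (auto simp: t_def)
  have tn: "t^n \<le> t^Suc n" using c by (intro power_increasing) auto
  have "norm (Rem X Y (Suc n)) \<le> norm (Y ** Lin X Y n) + norm ((X + Y) ** Rem X Y n)"
    by (simp add: Rem_Suc norm_triangle_ineq)
  also have "\<dots> \<le> y * norm (Lin X Y n) + (x + y) * norm (Rem X Y n)"
    by (intro add_mono order_trans[OF norm_mult_mat] mult_right_mono)
      (auto simp: x_def y_def norm_triangle_ineq)
  also have "\<dots> \<le> y * (c * n * y * t^n) + t * (c * (real n)^2 * y^2 * t^n)"
  proof (intro add_mono mult_mono)
    show "norm (Lin X Y n) \<le> c * n * y * t^n"
      using L xt c by (meson mult_left_mono order_trans zero_le_mult_iff of_nat_0_le_iff)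
  qed (use IH c in \<open>auto simp: t_def\<close>)
  also have "\<dots> = c * y^2 * (n * t^n + (real n)^2 * t^Suc n)" by (simp add: algebra_simps power2_eq_square)
  also have "\<dots> \<le> c * y^2 * (n * t^Suc n + (real n)^2 * t^Suc n)"
    using c tn by (intro mult_left_mono add_mono) auto
  also have "\<dots> = c * y^2 * ((n + (real n)^2) * t^Suc n)" by (simp add: algebra_simps)
  also have "\<dots> \<le> c * y^2 * ((real (Suc n))^2 * t^Suc n)"
  proof -
    have "n + (real n)^2 \<le> (real (Suc n))^2" by (simp add: power2_eq_square algebra_simps)
    then show ?thesis using c by (intro mult_left_mono mult_right_mono) auto
  qed
  also have "\<dots> = c * (real (Suc n))^2 * y^2 * t^Suc n" by (simp only: ac_simps)
  finally have "norm (Rem X Y (Suc n)) \<le> c * (real (Suc n))^2 * y^2 * t^Suc n" .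
  then show ?case by (simp only: c_def x_def y_def t_def)
qed


lemma real_le_2pow: "real k \<le> 2^k"
proof (induction k)
  case (Suc k)
  have "1 \<le> (2::real)^k" by simp
  have "real (Suc k) = real k + 1" by simp
  also have "\<dots> \<le> 2^k + 2^k" using Suc.IH \<open>1 \<le> (2::real)^k\<close> by linarith
  also have "\<dots> = 2^Suc k" by simp
  finally show ?case .
qed simp

lemma real_sq_le_4pow: "(real k)^2 \<le> 4^k"
proof -
  have "(real k)^2 \<le> (2^k)^2" using real_le_2pow[of k] by (intro power_mono) auto
  also have "\<dots> = (2^2)^k" by (simp only: power_mult[symmetric] mult.commute)
  also have "\<dots> = 4^k" by simp
  finally show ?thesis .
qed

lemma exp_sums_real: "(\<lambda>k. C * (z^k / fact k)) sums (C * exp (z::real))"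
proof -
  have "(\<lambda>k. z^k /\<^sub>R fact k) sums exp z" by (rule exp_converges)
  then have "(\<lambda>k. z^k / fact k) sums exp z" by (simp add: divide_inverse_commute)
  then show ?thesis by (rule sums_mult)
qed

lemma series_bound:
  fixes f :: "nat \<Rightarrow> 'm::finite cm"
  assumes "\<And>k. norm (f k) \<le> C * z^k" "0 \<le> C"
  shows "(\<lambda>k. (1 / fact k) *\<^sub>R f k) sums (\<Sum>k. (1 / fact k) *\<^sub>R f k)"
    and "norm (\<Sum>k. (1 / fact k) *\<^sub>R f k) \<le> C * exp z"
proof -
  have b: "norm ((1 / fact k) *\<^sub>R f k) \<le> C * (z^k / fact k)" for k
    using assms(1)[of k] by (simp add: divide_right_mono)
  have s: "summable (\<lambda>k. C * (z^k / fact k))" using exp_sums_real sums_summable by blast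
  have "summable (\<lambda>k. (1 / fact k) *\<^sub>R f k)"
    by (rule summable_comparison_test[OF _ s]) (use b in auto)
  then show "(\<lambda>k. (1 / fact k) *\<^sub>R f k) sums (\<Sum>k. (1 / fact k) *\<^sub>R f k)" by auto
  have "norm (\<Sum>k. (1 / fact k) *\<^sub>R f k) \<le> (\<Sum>k. C * (z^k / fact k))"
    by (rule norm_suminf_le[OF b s])
  also have "\<dots> = C * exp z" using exp_sums_real sums_unique by metis
  finally show "norm (\<Sum>k. (1 / fact k) *\<^sub>R f k) \<le> C * exp z" .
qed

lemma c0_nonneg: "0 \<le> norm (mat 1 :: 'm::finite cm)" by simp

lemma mexp_sums: "(\<lambda>k. (1 / fact k) *\<^sub>R mpow M k) sums mexp (M::'m::finite cm)"
  using series_bound(1)[of "mpow M" "norm (mat 1 :: 'm cm)" "norm M", OF norm_mpow c0_nonneg]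
  unfolding mexp_def .

lemma Lin_bound2: "norm (Lin (X::'m::finite cm) Y k) \<le> (norm (mat 1 :: 'm cm) * norm Y) * (2 * (norm X + 1))^k"
proof -
  have "norm (Lin X Y k) \<le> norm (mat 1 :: 'm cm) * k * norm Y * (norm X + 1)^k" by (rule norm_Lin)
  also have "\<dots> \<le> norm (mat 1 :: 'm cm) * 2^k * norm Y * (norm X + 1)^k"
    by (intro mult_right_mono mult_left_mono real_le_2pow) auto
  finally show ?thesis by (simp only: power_mult_distrib mult_ac)
qed

lemma Rem_bound2: "norm (Rem (X::'m::finite cm) Y k) \<le> (norm (mat 1 :: 'm cm) * (norm Y)^2) * (4 * (norm X + norm Y + 1))^k"
proof -
  have "norm (Rem X Y k) \<le> norm (mat 1 :: 'm cm) * (real k)^2 * (norm Y)^2 * (norm X + norm Y + 1)^k" by (rule norm_Rem)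
  also have "\<dots> \<le> norm (mat 1 :: 'm cm) * 4^k * (norm Y)^2 * (norm X + norm Y + 1)^k"
    by (intro mult_right_mono mult_left_mono real_sq_le_4pow) auto
  finally show ?thesis by (simp only: power_mult_distrib mult_ac)
qed

lemma Dexp_sums: "(\<lambda>k. (1 / fact k) *\<^sub>R Lin X Y k) sums Dexp X (Y::'m::finite cm)"
  using series_bound(1)[OF Lin_bound2] by (simp add: Dexp_def)

lemma norm_Dexp: "norm (Dexp X (Y::'m::finite cm)) \<le> (norm (mat 1 :: 'm cm) * norm Y) * exp (2 * (norm X + 1))"
  using series_bound(2)[OF Lin_bound2] by (simp add: Dexp_def)

lemma exp_quad: "norm (mexp (X + Y) - mexp X - Dexp X (Y::'m::finite cm))
   \<le> (norm (mat 1 :: 'm cm) * (norm Y)^2) * exp (4 * (norm X + norm Y + 1))"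
proof -
  have "(\<lambda>k. (1 / fact k) *\<^sub>R mpow (X + Y) k - (1 / fact k) *\<^sub>R mpow X k - (1 / fact k) *\<^sub>R Lin X Y k)
     sums (mexp (X + Y) - mexp X - Dexp X Y)"
    by (intro sums_diff mexp_sums Dexp_sums)
  then have "(\<lambda>k. (1 / fact k) *\<^sub>R Rem X Y k) sums (mexp (X + Y) - mexp X - Dexp X Y)"
    by (simp add: Rem_def scaleR_diff_right)
  then have "mexp (X + Y) - mexp X - Dexp X Y = (\<Sum>k. (1 / fact k) *\<^sub>R Rem X Y k)" by (rule sums_unique)
  then show ?thesis using series_bound(2)[OF Rem_bound2] by simp
qed


primrec hh :: "complex \<Rightarrow> complex \<Rightarrow> nat \<Rightarrow> complex" where
  "hh a b 0 = 0"
| "hh a b (Suc n) = a * hh a b n + b^n"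

lemma hh_diff: "(a - b) * hh a b k = a^k - b^k"
proof (induction k)
  case (Suc k)
  have "(a - b) * hh a b (Suc k) = a * ((a - b) * hh a b k) + (a - b) * b^k" by (simp add: algebra_simps)
  also have "\<dots> = a * (a^k - b^k) + (a - b) * b^k" by (simp only: Suc)
  also have "\<dots> = a^Suc k - b^Suc k" by (simp add: algebra_simps)
  finally show ?case .
qed simp

lemma hh_same: "hh a a (Suc k) = of_nat (Suc k) * a^k"
  by (induction k) (auto simp: algebra_simps)

definition GG :: "complex \<Rightarrow> complex \<Rightarrow> complex" where
  "GG a b = (if a = b then exp a else (exp a - exp b) / (a - b))"

lemma exp_sums_c: "(\<lambda>k. of_real (1 / fact k) * z^k) sums exp (z::complex)"
  using exp_converges[of z] by (simp add: scaleR_conv_of_real mult.commute divide_inverse)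

lemma hh_sums: "(\<lambda>k. of_real (1 / fact k) * hh a b k) sums GG a b"
proof (cases "a = b")
  case True
  have "(\<lambda>k. of_real (1 / fact (Suc k)) * hh a a (Suc k)) = (\<lambda>k. of_real (1 / fact k) * a^k)"
  proof
    fix k
    have "of_real (1 / fact (Suc k)) * hh a a (Suc k) = of_real (1 / fact (Suc k)) * of_nat (Suc k) * a^k"
      by (simp only: hh_same mult.assoc)
    also have "of_real (1 / fact (Suc k)) * (of_nat (Suc k) :: complex) = of_real (1 / fact k)"
    proof -
      have "(1 / fact (Suc k)) * real (Suc k) = 1 / fact k"
        by (simp add: field_simps del: of_nat_Suc)
      then show ?thesis by (metis of_real_mult of_real_of_nat_eq)
    qed
    finally show "of_real (1 / fact (Suc k)) * hh a a (Suc k) = of_real (1 / fact k) * a^k" .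
  qed
  then have "(\<lambda>k. of_real (1 / fact (Suc k)) * hh a a (Suc k)) sums exp a" using exp_sums_c by simp
  then have "(\<lambda>k. of_real (1 / fact k) * hh a a k) sums (exp a + of_real (1 / fact 0) * hh a a 0)"
    by (subst sums_Suc_iff[symmetric]) simp
  then show ?thesis using True by (simp add: GG_def)
next
  case False
  have "(\<lambda>k. (of_real (1 / fact k) * a^k - of_real (1 / fact k) * b^k) / (a - b)) sums ((exp a - exp b) / (a - b))"
    by (intro sums_divide sums_diff exp_sums_c)
  moreover have "(of_real (1 / fact k) * a^k - of_real (1 / fact k) * b^k) / (a - b) = of_real (1 / fact k) * hh a b k" for k
  proof -
    have h: "hh a b k = (a^k - b^k) / (a - b)" using hh_diff[of a b k] False
      by (auto simp: eq_divide_eq mult.commute)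
    show ?thesis unfolding h by (simp add: diff_divide_distrib[symmetric] divide_divide_eq_left mult.commute)
  qed
  ultimately show ?thesis using False by (simp add: GG_def)
qed

locale spec =
  fixes E :: "complex set" and P :: "complex \<Rightarrow> 'm::finite cm"
  assumes finE: "finite E"
    and proj: "\<And>a b. a \<in> E \<Longrightarrow> b \<in> E \<Longrightarrow> P a ** P b = (if a = b then P a else 0)"
    and resol: "(\<Sum>a\<in>E. P a) = mat 1"
begin

definition spectral :: "(complex \<Rightarrow> complex) \<Rightarrow> 'm cm" where
  "spectral c = (\<Sum>a\<in>E. csmult (c a) (P a))"

lemma decomp_mat: "Y = (\<Sum>j\<in>E. \<Sum>l\<in>E. P j ** Y ** P l)"
proof -
  have "Y = mat 1 ** Y ** mat 1" by simp
  also have "\<dots> = (\<Sum>j\<in>E. P j) ** Y ** (\<Sum>l\<in>E. P l)" by (simp add: resol)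
  also have "\<dots> = (\<Sum>j\<in>E. \<Sum>l\<in>E. P j ** Y ** P l)"
    apply (simp add: matrix_sum_left matrix_sum_right)
    apply (rule sum.swap)
    done
  finally show ?thesis .
qed

lemma mat_eqI: "(\<And>j l. j \<in> E \<Longrightarrow> l \<in> E \<Longrightarrow> P j ** X ** P l = P j ** Y ** P l) \<Longrightarrow> X = Y"
  by (subst decomp_mat, subst (2) decomp_mat) (auto intro!: sum.cong)

lemma P_spec: "j \<in> E \<Longrightarrow> P j ** spectral c = csmult (c j) (P j)"
proof -
  assume j: "j \<in> E"
  have "P j ** spectral c = (\<Sum>a\<in>E. csmult (c a) (P j ** P a))"
    by (simp add: spectral_def matrix_sum_right csmult_right)
  also have "\<dots> = (\<Sum>a\<in>E. if a = j then csmult (c j) (P j) else 0)"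
    using j by (intro sum.cong) (auto simp: proj)
  also have "\<dots> = csmult (c j) (P j)" using j finE by (simp add: sum.delta)
  finally show ?thesis .
qed

lemma spec_P: "j \<in> E \<Longrightarrow> spectral c ** P j = csmult (c j) (P j)"
proof -
  assume j: "j \<in> E"
  have "spectral c ** P j = (\<Sum>a\<in>E. csmult (c a) (P a ** P j))"
    by (simp add: spectral_def matrix_sum_left csmult_left)
  also have "\<dots> = (\<Sum>a\<in>E. if a = j then csmult (c j) (P j) else 0)"
    using j by (intro sum.cong) (auto simp: proj)
  also have "\<dots> = csmult (c j) (P j)" using j finE by (simp add: sum.delta)
  finally show ?thesis .
qed

lemma mpow_spec: "mpow (spectral c) k = spectral (\<lambda>a. c a ^ k)"
proof (induction k)
  case 0
  then show ?case by (simp add: spectral_def resol)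
next
  case (Suc k)
  have "mpow (spectral c) (Suc k) = (\<Sum>a\<in>E. csmult (c a ^ k) (spectral c ** P a))"
    by (simp add: Suc spectral_def[of "\<lambda>a. c a ^ k"] matrix_sum_right csmult_right)
  also have "\<dots> = (\<Sum>a\<in>E. csmult (c a ^ Suc k) (P a))"
    by (intro sum.cong) (auto simp: spec_P csmult_csmult mult.commute)
  finally show ?case by (simp add: spectral_def)
qed

lemma mexp_spec: "mexp (spectral c) = spectral (\<lambda>a. exp (c a))"
proof -
  have "(\<lambda>k. \<Sum>a\<in>E. csmult (of_real (1 / fact k) * c a ^ k) (P a)) sums (\<Sum>a\<in>E. csmult (exp (c a)) (P a))"
    by (intro sums_sum bounded_linear.sums[OF bl_csmult_left] exp_sums_c)
  moreover have "(\<Sum>a\<in>E. csmult (of_real (1 / fact k) * c a ^ k) (P a)) = (1 / fact k) *\<^sub>R mpow (spectral c) k" for k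
    by (simp only: mpow_spec) (simp add: spectral_def scaleR_sum_right scaleR_csmult)
  ultimately have "(\<lambda>k. (1 / fact k) *\<^sub>R mpow (spectral c) k) sums spectral (\<lambda>a. exp (c a))"
    by (simp add: spectral_def)
  then show ?thesis using mexp_sums sums_unique2 by blast
qed

lemma comp_spec: "j \<in> E \<Longrightarrow> l \<in> E \<Longrightarrow> P j ** spectral c ** P l = (if j = l then csmult (c j) (P j) else 0)"
  by (simp add: P_spec csmult_left proj)

lemma comp_Lin: "j \<in> E \<Longrightarrow> l \<in> E \<Longrightarrow>
   P j ** Lin (spectral c) Y k ** P l = csmult (hh (c j) (c l) k) (P j ** Y ** P l)"
proof (induction k)
  case 0 then show ?case by simp
next
  case (Suc k)
  have "P j ** Lin (spectral c) Y (Suc k) ** P l =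
     (P j ** spectral c) ** Lin (spectral c) Y k ** P l + P j ** Y ** (mpow (spectral c) k ** P l)"
    by (simp add: matrix_add_ldistrib matrix_add_rdistrib' matrix_mul_assoc)
  also have "\<dots> = csmult (c j) (P j ** Lin (spectral c) Y k ** P l) + csmult (c l ^ k) (P j ** Y ** P l)"
    using Suc.prems by (simp add: P_spec mpow_spec spec_P csmult_left csmult_right matrix_mul_assoc)
  also have "\<dots> = csmult (hh (c j) (c l) (Suc k)) (P j ** Y ** P l)"
    using Suc by (simp add: csmult_csmult csmult_add_left)
  finally show ?case .
qed

lemma comp_Dexp: "j \<in> E \<Longrightarrow> l \<in> E \<Longrightarrow>
   P j ** Dexp (spectral c) Y ** P l = csmult (GG (c j) (c l)) (P j ** Y ** P l)"
proof -
  assume jl: "j \<in> E" "l \<in> E"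
  have "(\<lambda>k. P j ** ((1 / fact k) *\<^sub>R Lin (spectral c) Y k) ** P l) sums (P j ** Dexp (spectral c) Y ** P l)"
    by (rule bounded_linear.sums[OF bl_sandwich Dexp_sums])
  moreover have "P j ** ((1 / fact k) *\<^sub>R Lin (spectral c) Y k) ** P l
      = csmult (of_real (1 / fact k) * hh (c j) (c l) k) (P j ** Y ** P l)" for k
  proof -
    have "P j ** ((1 / fact k) *\<^sub>R Lin (spectral c) Y k) ** P l = (1 / fact k) *\<^sub>R (P j ** Lin (spectral c) Y k ** P l)"
      by (rule sandwich_scaleR)
    then show ?thesis using jl by (simp add: comp_Lin scaleR_csmult)
  qed
  moreover have "(\<lambda>k. csmult (of_real (1 / fact k) * hh (c j) (c l) k) (P j ** Y ** P l)) sums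
      csmult (GG (c j) (c l)) (P j ** Y ** P l)"
    by (rule bounded_linear.sums[OF bl_csmult_left hh_sums])
  ultimately show ?thesis using sums_unique2 by simp
qed

end


lemma scal_id:
  assumes n: "n > 0" and ea: "exp a ^ n = exp a ^ r" and eb: "exp b ^ n = exp b ^ r"
  shows "hh (exp a) (exp b) n * GG a b = GG (of_nat r * a) (of_nat r * b) * (if a = b then of_nat n else of_nat r)"
proof (cases "a = b")
  case True
  obtain m where m: "n = Suc m" using n by (cases n) auto
  have "hh (exp a) (exp b) n * GG a b = of_nat n * (exp a ^ m * exp a)" using True m by (simp del: hh.simps add: hh_same GG_def)
  also have "\<dots> = of_nat n * exp a ^ n" using m by (simp add: mult.commute)
  also have "\<dots> = of_nat n * exp (of_nat r * a)" using ea by (simp add: exp_of_nat_mult)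
  finally show ?thesis using True by (simp add: GG_def mult.commute)
next
  case False
  have ab: "a - b \<noteq> 0" using False by simp
  have "hh (exp a) (exp b) n * GG a b = ((exp a - exp b) * hh (exp a) (exp b) n) / (a - b)"
    using False by (simp add: GG_def)
  also have "\<dots> = (exp a ^ r - exp b ^ r) / (a - b)" by (simp only: hh_diff ea eb)
  finally have L: "hh (exp a) (exp b) n * GG a b = (exp a ^ r - exp b ^ r) / (a - b)" .
  show ?thesis
  proof (cases "r = 0")
    case True then show ?thesis using False L by simp
  next
    case r: False
    have "of_nat r * a \<noteq> of_nat r * b" using r False by simp
    then have "GG (of_nat r * a) (of_nat r * b) * of_nat r
       = (exp (of_nat r * a) - exp (of_nat r * b)) / (of_nat r * (a - b)) * of_nat r"
      by (simp add: GG_def right_diff_distrib)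
    also have "\<dots> = (exp a ^ r - exp b ^ r) / (a - b)"
      using r ab by (simp only: exp_of_nat_mult) (simp add: field_simps)
    finally show ?thesis using L False by simp
  qed
qed

lemma Lin_add: "Lin X (Y1 + Y2) k = Lin X Y1 k + Lin X Y2 k"
  by (induction k) (simp_all add: matrix_add_ldistrib matrix_add_rdistrib' algebra_simps)

lemma csmult_eq_0: "csmult c (M::'m::finite cm) = 0 \<Longrightarrow> M \<noteq> 0 \<Longrightarrow> c = 0"
  using norm_csmult[of c M] by auto

lemma norm_sandwich: "norm ((P::'m::finite cm) ** B ** Q) \<le> norm P * norm Q * norm B"
proof -
  have "norm (P ** B ** Q) \<le> norm (P ** B) * norm Q" by (rule norm_mult_mat)
  also have "\<dots> \<le> norm P * norm B * norm Q" by (intro mult_right_mono norm_mult_mat) auto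
  finally show ?thesis by (simp add: ac_simps)
qed

context spec begin

lemma comp_ssp: "j \<in> E \<Longrightarrow> l \<in> E \<Longrightarrow> P j ** ssp E P B ** P l = (if j = l then P j ** B ** P l else 0)"
proof -
  assume jl: "j \<in> E" "l \<in> E"
  have "P j ** ssp E P B ** P l = (\<Sum>a\<in>E. (P j ** P a) ** B ** (P a ** P l))"
    by (simp add: ssp_def matrix_sum_left matrix_sum_right matrix_mul_assoc)
  also have "\<dots> = (\<Sum>a\<in>E. if a = j then (if j = l then P j ** B ** P l else 0) else 0)"
    using jl by (intro sum.cong) (auto simp: proj)
  also have "\<dots> = (if j = l then P j ** B ** P l else 0)" using jl finE by (simp add: sum.delta)
  finally show ?thesis .
qed

lemma comp_sspc: "j \<in> E \<Longrightarrow> l \<in> E \<Longrightarrow> P j ** sspc E P B ** P l = (if j = l then 0 else P j ** B ** P l)"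
proof -
  assume jl: "j \<in> E" "l \<in> E"
  let ?S = "{(j,l). j \<in> E \<and> l \<in> E \<and> j \<noteq> l}"
  have fin: "finite ?S" by (rule finite_subset[of _ "E \<times> E"]) (auto simp: finE)
  have "P j ** sspc E P B ** P l = (\<Sum>x\<in>?S. (P j ** P (fst x)) ** B ** (P (snd x) ** P l))"
    by (simp add: sspc_def matrix_sum_left matrix_sum_right matrix_mul_assoc case_prod_beta)
  also have "\<dots> = (\<Sum>x\<in>?S. if x = (j,l) then P j ** B ** P l else 0)"
    using jl by (intro sum.cong) (auto simp: proj split: if_splits)
  also have "\<dots> = (if j = l then 0 else P j ** B ** P l)" using jl fin by (simp add: sum.delta)
  finally show ?thesis .
qed

lemma norm_ssp: "norm (ssp E P B) \<le> (\<Sum>a\<in>E. norm (P a) * norm (P a)) * norm B"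
  unfolding ssp_def sum_distrib_right
  by (rule order_trans[OF norm_sum sum_mono[OF norm_sandwich]])

lemma norm_sspc: "norm (sspc E P B) \<le> (\<Sum>(j,l)\<in>{(j,l). j \<in> E \<and> l \<in> E \<and> j \<noteq> l}. norm (P j) * norm (P l)) * norm B"
  unfolding sspc_def sum_distrib_right
  by (rule order_trans[OF norm_sum sum_mono]) (auto simp: norm_sandwich)

end


lemma csmult_diff_left: "csmult (c - d) M = csmult c M - csmult d M"
  by (vector csmult_def left_diff_distrib)

lemma bnd_exp:
  assumes "norm Y \<le> K * b" "0 \<le> b" "b \<le> 1" "0 \<le> K"
  shows "norm (mexp (X + Y) - mexp X - Dexp X (Y::'m::finite cm))
     \<le> (norm (mat 1 :: 'm cm) * K^2 * exp (4 * (norm X + K + 1))) * b^2"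
proof -
  have Y1: "norm Y \<le> K" using assms by (metis mult_left_le order_trans)
  have Y2: "(norm Y)^2 \<le> K^2 * b^2"
    using assms by (metis power_mono norm_ge_zero power_mult_distrib)
  have "norm (mexp (X + Y) - mexp X - Dexp X Y) \<le> (norm (mat 1 :: 'm cm) * (norm Y)^2) * exp (4 * (norm X + norm Y + 1))"
    by (rule exp_quad)
  also have "\<dots> \<le> (norm (mat 1 :: 'm cm) * (K^2 * b^2)) * exp (4 * (norm X + K + 1))"
    using Y1 Y2 by (intro mult_mono mult_left_mono) auto
  finally show ?thesis by (simp add: ac_simps)
qed

lemma bnd_lin:
  assumes "norm Y \<le> K * b^2"
  shows "norm (Lin X (Y::'m::finite cm) n) \<le> (norm (mat 1 :: 'm cm) * n * (norm X + 1)^n * K) * b^2"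
proof -
  have "norm (Lin X Y n) \<le> norm (mat 1 :: 'm cm) * n * norm Y * (norm X + 1)^n" by (rule norm_Lin)
  also have "\<dots> \<le> norm (mat 1 :: 'm cm) * n * (K * b^2) * (norm X + 1)^n"
    using assms by (intro mult_right_mono mult_left_mono) auto
  finally show ?thesis by (simp add: ac_simps)
qed

lemma bnd_rem:
  assumes "norm Y \<le> K * b" "0 \<le> b" "b \<le> 1" "0 \<le> K"
  shows "norm (Rem X (Y::'m::finite cm) n) \<le> (norm (mat 1 :: 'm cm) * (real n)^2 * K^2 * (norm X + K + 1)^n) * b^2"
proof -
  have Y1: "norm Y \<le> K" using assms by (metis mult_left_le order_trans)
  have Y2: "(norm Y)^2 \<le> K^2 * b^2"
    using assms by (metis power_mono norm_ge_zero power_mult_distrib)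
  have Y3: "(norm X + norm Y + 1)^n \<le> (norm X + K + 1)^n"
    using Y1 by (intro power_mono) auto
  have "norm (Rem X Y n) \<le> norm (mat 1 :: 'm cm) * (real n)^2 * (norm Y)^2 * (norm X + norm Y + 1)^n"
    by (rule norm_Rem)
  also have "\<dots> \<le> norm (mat 1 :: 'm cm) * (real n)^2 * (K^2 * b^2) * (norm X + K + 1)^n"
    using Y2 Y3 by (intro mult_mono mult_left_mono) auto
  finally show ?thesis by (simp add: ac_simps)
qed


theorem theorem3:
  fixes A :: "complex^'m^'m" and E :: "complex set" and P :: "complex \<Rightarrow> complex^'m^'m"
    and k n :: nat
  assumes finE: "finite E"
    and decomp: "A = (\<Sum>a\<in>E. csmult a (P a))"
    and proj: "\<And>a b. a \<in> E \<Longrightarrow> b \<in> E \<Longrightarrow> P a ** P b = (if a = b then P a else 0)"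
    and nonzero: "\<And>a. a \<in> E \<Longrightarrow> P a \<noteq> 0"
    and resol: "(\<Sum>a\<in>E. P a) = mat 1"
    and kpos: "k > 0"
    and kper: "mpow (mexp A) k = mat 1"
    and kmin: "\<And>j. 0 < j \<Longrightarrow> j < k \<Longrightarrow> mpow (mexp A) j \<noteq> mat 1"
    and npos: "n > 0"
  shows "\<exists>c \<delta>. c > 0 \<and> \<delta> > 0 \<and>
    (\<forall>B :: complex^'m^'m. norm B \<le> \<delta> \<and> diagonalizable (A + B) \<longrightarrow>
       norm (mpow (mexp (A + B)) n
             - mexp (csmult (of_nat (n mod k)) A + csmult (of_nat (n mod k)) (sspc E P B)
                     + csmult (of_nat n) (ssp E P B)))
         \<le> c * (norm B)\<^sup>2)"
proof -
  interpret spec E P using finE proj resol by unfold_locales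
  define r where "r = n mod k"
  have Aspec: "A = spectral (\<lambda>a. a)" using decomp by (simp add: spectral_def)
  define U where "U = mexp A"
  have Uspec: "U = spectral (\<lambda>a. exp a)" using Aspec mexp_spec[of "\<lambda>a. a"] by (simp add: U_def)
  have ek: "exp a ^ k = 1" if a: "a \<in> E" for a
  proof -
    have "mpow U k = spectral (\<lambda>a. exp a ^ k)" by (simp add: Uspec mpow_spec)
    then have "P a ** spectral (\<lambda>a. exp a ^ k) ** P a = P a ** mat 1 ** P a" using kper U_def by simp
    then have "csmult (exp a ^ k) (P a) = P a" using a by (simp add: comp_spec proj)
    then have "csmult (exp a ^ k - 1) (P a) = 0" by (simp add: csmult_diff_left)
    then show "exp a ^ k = 1" using csmult_eq_0 nonzero a by fastforce
  qed
  have en: "exp a ^ n = exp a ^ r" if a: "a \<in> E" for a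
  proof -
    have "n = k * (n div k) + r" by (simp add: r_def)
    then have "exp a ^ n = (exp a ^ k) ^ (n div k) * exp a ^ r" by (metis power_add power_mult)
    then show ?thesis using ek[OF a] by simp
  qed
  define rA where "rA = csmult (of_nat r) A"
  have rAspec: "rA = spectral (\<lambda>a. of_nat r * a)"
    by (simp add: rA_def Aspec spectral_def csmult_sum csmult_csmult)
  have Un: "mpow U n = mexp rA"
    unfolding Uspec rAspec mpow_spec mexp_spec unfolding spectral_def
    by (intro sum.cong refl) (simp add: en exp_of_nat_mult)
  define c where "c = norm (mat 1 :: 'm cm)"
  have c: "c \<ge> 0" by (simp add: c_def)
  define K0 where "K0 = c * exp (2 * (norm A + 1))"
  define K1 where "K1 = c * 1^2 * exp (4 * (norm A + 1 + 1))"
  define K2 where "K2 = K0 + K1"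
  define Ns where "Ns = (\<Sum>a\<in>E. norm (P a) * norm (P a))"
  define Nc where "Nc = (\<Sum>(j,l)\<in>{(j,l). j \<in> E \<and> l \<in> E \<and> j \<noteq> l}. norm (P j) * norm (P l))"
  define K3 where "K3 = real r * Nc + real n * Ns"
  have K0: "K0 \<ge> 0" and K1: "K1 \<ge> 0" and K2: "K2 \<ge> 0" using c by (auto simp: K0_def K1_def K2_def)
  have K3: "K3 \<ge> 0" unfolding K3_def Nc_def Ns_def
    by (intro add_nonneg_nonneg mult_nonneg_nonneg sum_nonneg) (auto simp: case_prod_beta)
  define cf where "cf = c * n * (norm U + 1)^n * K1 + c * (real n)^2 * K2^2 * (norm U + K2 + 1)^n
     + c * K3^2 * exp (4 * (norm rA + K3 + 1)) + 1"
  have cf: "cf > 0" unfolding cf_def using c K1 K2 K3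
    by (intro add_nonneg_pos add_nonneg_nonneg mult_nonneg_nonneg) auto
  show ?thesis
  proof (intro exI conjI allI impI)
    show "cf > 0" by (rule cf)
    show "(1::real) > 0" by simp
    fix B :: "'m cm"
    assume "norm B \<le> 1 \<and> diagonalizable (A + B)"
    then have b1: "norm B \<le> 1" by simp
    define b where "b = norm B"
    have b0: "0 \<le> b" "b \<le> 1" using b1 by (auto simp: b_def)
    define D where "D = Dexp A B"
    define R1 where "R1 = mexp (A + B) - U - D"
    define W where "W = mexp (A + B) - U"
    have R1b: "norm R1 \<le> K1 * b^2"
      using bnd_exp[of B 1 b A] b0 by (simp add: R1_def U_def D_def K1_def c_def b_def)
    have Db: "norm D \<le> K0 * b"
      using norm_Dexp[of A B] by (simp add: D_def K0_def c_def b_def ac_simps)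
    have WD: "W = D + R1" by (simp add: W_def R1_def)
    have Wb: "norm W \<le> K2 * b"
    proof -
      have "norm W \<le> norm D + norm R1" by (simp add: WD norm_triangle_ineq)
      also have "\<dots> \<le> K0 * b + K1 * b^2" using Db R1b by simp
      also have "\<dots> \<le> K0 * b + K1 * b"
        using b0 K1 by (intro add_left_mono mult_left_mono) (auto simp: power2_eq_square mult_left_le)
      finally show ?thesis by (simp add: K2_def algebra_simps)
    qed
    have LHS: "mpow (mexp (A + B)) n = mexp rA + Lin U D n + Lin U R1 n + Rem U W n"
    proof -
      have "mexp (A + B) = U + W" by (simp add: W_def)
      then have "mpow (mexp (A + B)) n = mpow U n + Lin U W n + Rem U W n" by (simp add: Rem_def)
      then show ?thesis by (simp add: Un WD Lin_add)
    qed
    define C where "C = csmult (of_nat r) (sspc E P B) + csmult (of_nat n) (ssp E P B)"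
    have Cb: "norm C \<le> K3 * b"
    proof -
      have "norm C \<le> real r * norm (sspc E P B) + real n * norm (ssp E P B)"
        unfolding C_def by (rule order_trans[OF norm_triangle_ineq]) (simp add: norm_csmult)
      also have "\<dots> \<le> real r * (Nc * b) + real n * (Ns * b)"
        using norm_ssp[of B] norm_sspc[of B]
        by (intro add_mono mult_left_mono) (auto simp: Nc_def Ns_def b_def)
      finally show ?thesis by (simp add: K3_def algebra_simps)
    qed
    define R3 where "R3 = mexp (rA + C) - mexp rA - Dexp rA C"
    have R3b: "norm R3 \<le> (c * K3^2 * exp (4 * (norm rA + K3 + 1))) * b^2"
      unfolding R3_def c_def by (rule bnd_exp[OF Cb b0 K3])
    have key: "Lin U D n = Dexp rA C"
    proof (rule mat_eqI)
      fix j l assume jl: "j \<in> E" "l \<in> E"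
      have "P j ** Lin U D n ** P l = csmult (hh (exp j) (exp l) n * GG j l) (P j ** B ** P l)"
        using jl comp_Lin[of j l "\<lambda>a. exp a" D n] comp_Dexp[of j l "\<lambda>a. a" B]
        by (simp add: Uspec D_def Aspec[symmetric] csmult_csmult)
      also have "\<dots> = csmult (GG (of_nat r * j) (of_nat r * l) * (if j = l then of_nat n else of_nat r)) (P j ** B ** P l)"
        using scal_id[OF npos en[OF jl(1)] en[OF jl(2)]] by simp
      also have "\<dots> = P j ** Dexp rA C ** P l"
      proof -
        have "P j ** C ** P l = csmult (if j = l then of_nat n else of_nat r) (P j ** B ** P l)"
          using jl by (simp add: C_def matrix_add_ldistrib matrix_add_rdistrib' csmult_left csmult_right
              comp_ssp comp_sspc)
        then show ?thesis using jl comp_Dexp[of j l "\<lambda>a. of_nat r * a" C]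
          by (simp add: rAspec[symmetric] csmult_csmult)
      qed
      finally show "P j ** Lin U D n ** P l = P j ** Dexp rA C ** P l" .
    qed
    have RHS: "mexp (csmult (of_nat (n mod k)) A + csmult (of_nat (n mod k)) (sspc E P B)
                     + csmult (of_nat n) (ssp E P B)) = mexp rA + Lin U D n + R3"
      by (simp add: R3_def key rA_def C_def r_def add.assoc)
    have "norm (mpow (mexp (A + B)) n
             - mexp (csmult (of_nat (n mod k)) A + csmult (of_nat (n mod k)) (sspc E P B)
                     + csmult (of_nat n) (ssp E P B))) = norm (Lin U R1 n + Rem U W n - R3)"
      unfolding LHS RHS by (simp add: algebra_simps)
    also have "\<dots> \<le> norm (Lin U R1 n) + norm (Rem U W n) + norm R3"
      by (rule order_trans[OF norm_triangle_ineq4], rule add_right_mono, rule norm_triangle_ineq)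
    also have "\<dots> \<le> (c * n * (norm U + 1)^n * K1) * b^2 + (c * (real n)^2 * K2^2 * (norm U + K2 + 1)^n) * b^2
        + (c * K3^2 * exp (4 * (norm rA + K3 + 1))) * b^2"
      using bnd_lin[OF R1b, of U n] bnd_rem[OF Wb b0 K2, of U n] R3b
      by (intro add_mono) (auto simp: c_def)
    also have "\<dots> \<le> cf * b^2"
    proof -
      have "0 \<le> b^2" by simp
      then show ?thesis unfolding cf_def by (simp only: distrib_right mult_1)
    qed
    finally show "norm (mpow (mexp (A + B)) n
             - mexp (csmult (of_nat (n mod k)) A + csmult (of_nat (n mod k)) (sspc E P B)
                     + csmult (of_nat n) (ssp E P B))) \<le> cf * (norm B)\<^sup>2" by (simp add: b_def)
  qed
qed

end
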